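(* Let $d\in\{1,2,3,7,11\}$, $K=\mathbb{Q}(\sqrt{-d})$ with discriminant $d_K$ and ring of integers $\mathcal{O}_d$, let $\Delta$ be a positive integer which is not of the form $\beta\bar\beta$ with $\beta\in\mathcal{O}_d$, and let $k\ge1$ be odd. Let $$H_{k,\Delta}(z)=\sum_{\substack{(a,b,c)\in\mathbb{Z}\times\mathcal{O}_d\times\mathbb{Z}\\ b\bar b-ac=\Delta,\ a<0}}\max\left(0,\left(a|z|^2+bz+\bar b\bar z+c\right)^k\right).$$ Then the average value of $H_{k,\Delta}$ over a fundamental parallelogram $\mathcal{P}$ of the lattice $\mathcal{O}_d\subset\mathbb{C}$ is $$\langle H_{k,\Delta}\rangle_{av}:=\frac{1}{|\mathcal{P}|}\int_{\mathcal{P}}H_{k,\Delta}(x+iy)\,dx\,dy=\frac{2\pi\Delta^{k+1}}{(k+1)\sqrt{|d_K|}}\,Z(-\Delta,k+1).$$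
   Context: $H_{k,\Delta}$ is continuous and invariant under translation by $\mathcal{O}_d$. $\mathcal{P}$ is the fundamental parallelogram $\{x+y\omega:0\le x,y<1\}$ for a $\mathbb{Z}$-basis $\{1,\omega\}$ of $\mathcal{O}_d$; its Euclidean area is $|\mathcal{P}|=\sqrt{|d_K|}/2$. For integers $D$ and $n\ge1$, $r(D,n)=\#\{\beta\in\mathcal{O}_d/n\mathcal{O}_d:\ \beta\bar\beta+D\equiv0\pmod n\}$, and $Z(D,s)=\sum_{n=1}^\infty r(D,n)\,n^{-s-1}$. *)

theory Defs
  imports "HOL-Analysis.Analysis"
begin

definition omega :: "nat \<Rightarrow> complex" where
  "omega d = (if d mod 4 = 3 then (1 + \<i> * complex_of_real (sqrt (real d))) / 2
              else \<i> * complex_of_real (sqrt (real d)))"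

definition discK :: "nat \<Rightarrow> int" where
  "discK d = (if d mod 4 = 3 then - int d else - 4 * int d)"

definition Od :: "nat \<Rightarrow> complex set" where
  "Od d = {of_int m + of_int n * omega d | m n. True}"

definition Par :: "nat \<Rightarrow> complex set" where
  "Par d = {of_real x + of_real y * omega d | x y. 0 \<le> x \<and> x < 1 \<and> 0 \<le> y \<and> y < 1}"

definition congOd :: "nat \<Rightarrow> nat \<Rightarrow> (complex \<times> complex) set" where
  "congOd d n = {(\<beta>, \<gamma>). \<beta> \<in> Od d \<and> \<gamma> \<in> Od d \<and>
                   (\<exists>\<delta>\<in>Od d. \<beta> - \<gamma> = of_nat n * \<delta>)}"

definition r_count :: "nat \<Rightarrow> int \<Rightarrow> nat \<Rightarrow> nat" where
  "r_count d D n = card {C \<in> Od d // congOd d n.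
      \<exists>\<beta>\<in>C. \<exists>m::int. \<beta> * cnj \<beta> + of_int D = of_int (int n * m)}"

definition Zfun :: "nat \<Rightarrow> int \<Rightarrow> real \<Rightarrow> real" where
  "Zfun d D s = (\<Sum>n. real (r_count d D (Suc n)) * real (Suc n) powr (- s - 1))"

definition Hfun :: "nat \<Rightarrow> nat \<Rightarrow> int \<Rightarrow> complex \<Rightarrow> real" where
  "Hfun d k \<Delta> z = infsum (\<lambda>(a, b, c).
       max 0 ((Re (of_int a * complex_of_real ((cmod z)\<^sup>2) + b * z + cnj b * cnj z + of_int c)) ^ k))
     {(a, b, c). b \<in> Od d \<and> b * cnj b - of_int (a * c) = of_int \<Delta> \<and> a < 0}"

end

theory Submission
  imports Defs
begin

definition tw :: "nat \<Rightarrow> int" where "tw d = (if d mod 4 = 3 then 1 else 0)"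
definition nw :: "nat \<Rightarrow> int" where "nw d = (if d mod 4 = 3 then (int d + 1) div 4 else int d)"
definition Qf :: "nat \<Rightarrow> int \<Rightarrow> int \<Rightarrow> int" where "Qf d x y = x^2 + tw d * x * y + nw d * y^2"
definition lat :: "nat \<Rightarrow> int \<Rightarrow> int \<Rightarrow> complex" where "lat d x y = of_int x + of_int y * omega d"
definition cy :: "nat \<Rightarrow> complex \<Rightarrow> real" where "cy d z = Im z / Im (omega d)"
definition cx :: "nat \<Rightarrow> complex \<Rightarrow> real" where "cx d z = Re z - cy d z * Re (omega d)"

lemma omega_Im_pos: "d > 0 \<Longrightarrow> Im (omega d) > 0"
  by (auto simp: omega_def)

lemma omega_trace: "omega d + cnj (omega d) = of_int (tw d)"
  by (auto simp: omega_def tw_def complex_eq_iff)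

lemma cnj_omega: "cnj (omega d) = of_int (tw d) - omega d"
  using omega_trace[of d] by (simp add: algebra_simps eq_diff_eq)

lemma omega_norm: "omega d * cnj (omega d) = of_int (nw d)"
proof (cases "d mod 4 = 3")
  case True
  then have "int d + 1 = 4 * ((int d + 1) div 4)" by presburger
  then have "real d + 1 = 4 * real_of_int ((int d + 1) div 4)"
    by (metis of_int_1 of_int_add of_int_mult of_int_numeral of_int_of_nat_eq)
  with True show ?thesis
    by (auto simp: omega_def nw_def complex_eq_iff field_simps power2_eq_square)
next
  case False
  then show ?thesis
    by (auto simp: omega_def nw_def complex_eq_iff power2_eq_square)
qed

lemma lat_norm: "lat d x y * cnj (lat d x y) = of_int (Qf d x y)"
proof -
  have "lat d x y * cnj (lat d x y) = of_int x ^ 2 + of_int x * of_int y * (omega d + cnj (omega d))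
        + of_int y ^ 2 * (omega d * cnj (omega d))"
    by (simp add: lat_def algebra_simps power2_eq_square)
  also have "\<dots> = of_int (Qf d x y)"
    by (simp add: omega_trace omega_norm Qf_def algebra_simps)
  finally show ?thesis .
qed

lemma cnj_lat: "cnj (lat d x y) = lat d (x + tw d * y) (- y)"
  by (simp add: lat_def cnj_omega algebra_simps)

lemma cy_lat: "d > 0 \<Longrightarrow> cy d (lat d x y) = y"
  using omega_Im_pos[of d] by (simp add: cy_def lat_def)

lemma cx_lat: "d > 0 \<Longrightarrow> cx d (lat d x y) = x"
  using omega_Im_pos[of d] cy_lat[of d x y] by (simp add: cx_def lat_def)

lemma cy_add: "cy d (z + w) = cy d z + cy d w"
  by (simp add: cy_def add_divide_distrib)

lemma cx_add: "cx d (z + w) = cx d z + cx d w"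
  by (simp add: cx_def cy_add algebra_simps)

lemma coord_repr: "d > 0 \<Longrightarrow> z = of_real (cx d z) + of_real (cy d z) * omega d"
  using omega_Im_pos[of d] by (simp add: cx_def cy_def complex_eq_iff)

lemma lat_inj: "d > 0 \<Longrightarrow> lat d x y = lat d x' y' \<longleftrightarrow> x = x' \<and> y = y'"
  by (metis cx_lat cy_lat of_int_eq_iff)

lemma Od_lat: "Od d = range (\<lambda>(x, y). lat d x y)"
  by (auto simp: Od_def lat_def)

lemma Par_coord: "d > 0 \<Longrightarrow> Par d = {z. 0 \<le> cx d z \<and> cx d z < 1 \<and> 0 \<le> cy d z \<and> cy d z < 1}"
proof -
  assume d: "d > 0"
  show ?thesis
  proof (rule set_eqI, rule iffI)
    fix z assume "z \<in> Par d"
    then obtain x y where z: "z = of_real x + of_real y * omega d" "0 \<le> x" "x < 1" "0 \<le> y" "y < 1"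
      by (auto simp: Par_def)
    have "cy d z = y" using omega_Im_pos[OF d] z(1) by (simp add: cy_def)
    moreover have "cx d z = x" using omega_Im_pos[OF d] z(1) \<open>cy d z = y\<close> by (simp add: cx_def)
    ultimately show "z \<in> {z. 0 \<le> cx d z \<and> cx d z < 1 \<and> 0 \<le> cy d z \<and> cy d z < 1}" using z by auto
  next
    fix z assume "z \<in> {z. 0 \<le> cx d z \<and> cx d z < 1 \<and> 0 \<le> cy d z \<and> cy d z < 1}"
    then show "z \<in> Par d" unfolding Par_def using coord_repr[OF d, of z] by blast
  qed
qed

lemma lat_diff: "lat d x y - lat d x' y' = lat d (x - x') (y - y')"
  by (simp add: lat_def algebra_simps)

lemma lat_add: "lat d x y + lat d x' y' = lat d (x + x') (y + y')"
  by (simp add: lat_def algebra_simps)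

lemma lat_smult: "of_nat n * lat d p q = lat d (int n * p) (int n * q)"
  by (simp add: lat_def algebra_simps)

lemma lat_in_Od[simp]: "lat d x y \<in> Od d"
  by (auto simp: Od_lat)

lemma Od_cases: assumes "b \<in> Od d" obtains x y where "b = lat d x y"
  using assms by (auto simp: Od_lat)

lemma equiv_congOd: "equiv (Od d) (congOd d n)"
proof (rule equivI)
  show "congOd d n \<subseteq> Od d \<times> Od d" by (auto simp: congOd_def)
  show "refl_on (Od d) (congOd d n)"
  proof -
    have "lat d 0 0 = 0" by (simp add: lat_def)
    then have "0 \<in> Od d" by (metis lat_in_Od)
    then show ?thesis unfolding refl_on_def congOd_def by auto
  qed
  show "sym (congOd d n)"
  proof (rule symI)
    fix b c assume "(b, c) \<in> congOd d n"
    then obtain e where "b \<in> Od d" "c \<in> Od d" "e \<in> Od d" "b - c = of_nat n * e"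
      by (auto simp: congOd_def)
    then obtain p q where "e = lat d p q" by (auto elim: Od_cases)
    then have "c - b = of_nat n * lat d (-p) (-q)" using \<open>b - c = _\<close>
      by (simp add: lat_def algebra_simps)
    then show "(c, b) \<in> congOd d n"
      using \<open>b \<in> Od d\<close> \<open>c \<in> Od d\<close> by (auto simp: congOd_def)
  qed
  show "trans (congOd d n)"
  proof (rule transI)
    fix b c g assume "(b, c) \<in> congOd d n" "(c, g) \<in> congOd d n"
    then obtain e e' where "b \<in> Od d" "c \<in> Od d" "e \<in> Od d" "b - c = of_nat n * e"
       "g \<in> Od d" "e' \<in> Od d" "c - g = of_nat n * e'"
      by (auto simp: congOd_def)
    then obtain p q p' q' where "e = lat d p q" "e' = lat d p' q'" by (auto elim!: Od_cases)
    then have "b - g = of_nat n * lat d (p + p') (q + q')" using \<open>b - c = _\<close> \<open>c - g = _\<close>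
      by (simp add: lat_def algebra_simps)
    then show "(b, g) \<in> congOd d n"
      using \<open>b \<in> Od d\<close> \<open>g \<in> Od d\<close> by (auto simp: congOd_def)
  qed
qed

lemma congOd_lat:
  assumes "d > 0"
  shows "(lat d x y, lat d x' y') \<in> congOd d n \<longleftrightarrow> (int n dvd x - x' \<and> int n dvd y - y')"
proof
  assume "(lat d x y, lat d x' y') \<in> congOd d n"
  then obtain e where "e \<in> Od d" "lat d x y - lat d x' y' = of_nat n * e" by (auto simp: congOd_def)
  then obtain p q where "lat d (x - x') (y - y') = lat d (int n * p) (int n * q)"
    by (auto elim!: Od_cases simp: lat_diff lat_smult)
  then show "int n dvd x - x' \<and> int n dvd y - y'" using lat_inj[OF assms] by auto
next
  assume "int n dvd x - x' \<and> int n dvd y - y'"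
  then obtain p q where "x - x' = int n * p" "y - y' = int n * q" by (auto elim!: dvdE)
  then have "lat d x y - lat d x' y' = of_nat n * lat d p q" by (simp add: lat_diff lat_smult)
  then show "(lat d x y, lat d x' y') \<in> congOd d n" by (auto simp: congOd_def)
qed

lemma Qf_cong:
  assumes "m dvd x - x'" "m dvd y - y'"
  shows "m dvd Qf d x y - Qf d x' y'"
proof -
  obtain a where "x - x' = m * a" using assms(1) by (elim dvdE)
  obtain b where "y - y' = m * b" using assms(2) by (elim dvdE)
  have ab: "x = x' + m * a" "y = y' + m * b" using \<open>x - x' = m * a\<close> \<open>y - y' = m * b\<close> by simp_all
  have "Qf d x y - Qf d x' y' = m * (2 * x' * a + m * a^2 + tw d * (x' * b + a * y' + m * a * b)
          + nw d * (2 * y' * b + m * b^2))"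
    unfolding Qf_def ab by (simp add: algebra_simps power2_eq_square)
  then show ?thesis by simp
qed

definition Rset :: "nat \<Rightarrow> int \<Rightarrow> nat \<Rightarrow> (int \<times> int) set" where
  "Rset d \<Delta> n = {(x, y). 0 \<le> x \<and> x < int n \<and> 0 \<le> y \<and> y < int n \<and> int n dvd Qf d x y - \<Delta>}"

lemma mod_eq_small: "0 \<le> x \<Longrightarrow> x < m \<Longrightarrow> 0 \<le> x' \<Longrightarrow> x' < m \<Longrightarrow> m dvd x - x' \<Longrightarrow> x = (x'::int)"
  by (metis mod_eq_dvd_iff mod_pos_pos_trivial)

lemma r_count_Rset:
  assumes d: "d > 0" and n: "n > 0"
  shows "r_count d (-\<Delta>) n = card (Rset d \<Delta> n)"
proof -
  define cls where "cls = (\<lambda>(x, y). congOd d n `` {lat d x y})"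
  define P where "P = (\<lambda>C. \<exists>\<beta>\<in>C. \<exists>m::int. \<beta> * cnj \<beta> + of_int (- \<Delta>) = of_int (int n * m))"
  have eqv: "equiv (Od d) (congOd d n)" by (rule equiv_congOd)
  have mem: "lat d x' y' \<in> cls (x, y) \<longleftrightarrow> int n dvd x - x' \<and> int n dvd y - y'" for x y x' y'
    using congOd_lat[OF d] by (simp add: cls_def)
  have Pcls: "P (cls (x, y)) \<longleftrightarrow> int n dvd Qf d x y - \<Delta>" for x y
  proof
    assume "P (cls (x, y))"
    then obtain \<beta> m where b: "\<beta> \<in> cls (x, y)" "\<beta> * cnj \<beta> + of_int (- \<Delta>) = of_int (int n * m)"
      unfolding P_def by blast
    then have "\<beta> \<in> Od d" by (auto simp: cls_def congOd_def)
    then obtain x' y' where bx: "\<beta> = lat d x' y'" by (auto elim: Od_cases)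
    have "(of_int (Qf d x' y' - \<Delta>) :: complex) = of_int (int n * m)"
      using b(2) unfolding bx lat_norm by simp
    then have "Qf d x' y' - \<Delta> = int n * m" by (simp only: of_int_eq_iff)
    then have 1: "int n dvd Qf d x' y' - \<Delta>" by simp
    have "int n dvd x - x'" "int n dvd y - y'" using b(1) mem unfolding bx by auto
    then have 2: "int n dvd Qf d x y - Qf d x' y'" by (rule Qf_cong)
    have "Qf d x y - \<Delta> = (Qf d x y - Qf d x' y') + (Qf d x' y' - \<Delta>)" by simp
    then show "int n dvd Qf d x y - \<Delta>" using 1 2 by (metis dvd_add)
  next
    assume "int n dvd Qf d x y - \<Delta>"
    then obtain m where m: "Qf d x y - \<Delta> = int n * m" by (elim dvdE)
    have "lat d x y * cnj (lat d x y) + of_int (- \<Delta>) = (of_int (Qf d x y - \<Delta>) :: complex)"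
      by (simp add: lat_norm)
    also have "\<dots> = of_int (int n * m)" by (simp only: m)
    finally have "lat d x y * cnj (lat d x y) + of_int (- \<Delta>) = of_int (int n * m)" .
    moreover have "lat d x y \<in> cls (x, y)" using mem by simp
    ultimately show "P (cls (x, y))" unfolding P_def by blast
  qed
  have "bij_betw cls (Rset d \<Delta> n) {C \<in> Od d // congOd d n. P C}"
  proof (rule bij_betw_imageI)
    show "inj_on cls (Rset d \<Delta> n)"
    proof (rule inj_onI, clarify)
      fix x y x' y' assume "(x, y) \<in> Rset d \<Delta> n" "(x', y') \<in> Rset d \<Delta> n" "cls (x, y) = cls (x', y')"
      have "lat d x' y' \<in> cls (x', y')" using mem[of x' y' x' y'] by simp
      then have "lat d x' y' \<in> cls (x, y)" using \<open>cls (x, y) = cls (x', y')\<close> by simp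
      then have "int n dvd x - x'" "int n dvd y - y'" using mem[of x' y' x y] by simp_all
      moreover have "0 \<le> x" "x < int n" "0 \<le> y" "y < int n" "0 \<le> x'" "x' < int n" "0 \<le> y'" "y' < int n"
        using \<open>(x, y) \<in> Rset d \<Delta> n\<close> \<open>(x', y') \<in> Rset d \<Delta> n\<close> by (auto simp: Rset_def)
      ultimately show "x = x' \<and> y = y'" using mod_eq_small by blast
    qed
    show "cls ` Rset d \<Delta> n = {C \<in> Od d // congOd d n. P C}"
    proof (rule set_eqI, rule iffI)
      fix C assume "C \<in> cls ` Rset d \<Delta> n"
      then obtain x y where "(x, y) \<in> Rset d \<Delta> n" "C = cls (x, y)" by auto
      then show "C \<in> {C \<in> Od d // congOd d n. P C}"
        using Pcls by (auto simp: Rset_def cls_def intro!: quotientI)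
    next
      fix C assume "C \<in> {C \<in> Od d // congOd d n. P C}"
      then obtain \<beta> where C: "\<beta> \<in> Od d" "C = congOd d n `` {\<beta>}" "P C" by (auto elim!: quotientE)
      then obtain x y where bx: "\<beta> = lat d x y" by (auto elim: Od_cases)
      define x0 where "x0 = x mod int n"
      define y0 where "y0 = y mod int n"
      have "int n dvd x - x0" "int n dvd y - y0"
        by (simp_all add: x0_def y0_def dvd_minus_mod)
      then have "(lat d x y, lat d x0 y0) \<in> congOd d n" using congOd_lat[OF d] by simp
      then have "C = cls (x0, y0)" using C(2) bx eqv by (simp add: cls_def equiv_class_eq)
      moreover have "0 \<le> x0" "x0 < int n" "0 \<le> y0" "y0 < int n" using n by (simp_all add: x0_def y0_def)
      ultimately show "C \<in> cls ` Rset d \<Delta> n"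
        using C(3) Pcls by (auto simp: Rset_def)
    qed
  qed
  then have "card (Rset d \<Delta> n) = card {C \<in> Od d // congOd d n. P C}" by (rule bij_betw_same_card)
  then show ?thesis by (simp add: r_count_def P_def)
qed

lemma finite_int_range_filter[simp]: "finite {x::int. a \<le> x \<and> x < b \<and> P x}"
  by (rule finite_subset[of _ "{a..<b}"]) auto

lemma count_mult_2:
  fixes m N c :: int
  assumes m: "m > 0" and N: "N \<ge> 0"
  shows "real (card {x\<in>{0..<N}. m dvd 2*x + c}) \<le> 2 * N / m + 1"
proof -
  define A where "A = {x\<in>{0..<N}. m dvd 2*x + c}"
  define f where "f x = (2*x + c) div m" for x
  have fx: "of_int (f x) = (2 * of_int x + of_int c) / (of_int m :: real)" if "x \<in> A" for x
  proof -
    have "m dvd 2*x + c" using that by (simp add: A_def)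
    then have "2*x + c = m * f x" by (simp add: f_def)
    then have "(of_int (2*x + c) :: real) = of_int m * of_int (f x)" by (metis of_int_mult)
    then show ?thesis using m by (simp add: field_simps)
  qed
  have inj: "inj_on f A"
  proof (rule inj_onI)
    fix x x' assume "x \<in> A" "x' \<in> A" "f x = f x'"
    then have "(2 * of_int x + of_int c) / (of_int m :: real) = (2 * of_int x' + of_int c) / of_int m"
      using fx by metis
    then show "x = x'" using m by (simp add: divide_cancel_right)
  qed
  define a where "a = \<lceil>of_int c / (of_int m :: real)\<rceil>"
  define b where "b = \<lceil>(of_int c + 2 * of_int N) / (of_int m :: real)\<rceil>"
  have sub: "f ` A \<subseteq> {a..<b}"
  proof
    fix j assume "j \<in> f ` A"
    then obtain x where x: "x \<in> A" "j = f x" by auto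
    then have x0: "0 \<le> x" "x < N" by (auto simp: A_def)
    have j: "of_int j = (2 * of_int x + of_int c) / (of_int m :: real)" using fx x by simp
    have "of_int c / (of_int m :: real) \<le> of_int j" unfolding j using m x0
      by (intro divide_right_mono) auto
    then have "a \<le> j" unfolding a_def by (simp add: ceiling_le_iff)
    moreover have "of_int j < (of_int c + 2 * of_int N) / (of_int m :: real)" unfolding j using m x0
      by (intro divide_strict_right_mono) auto
    then have "j < b" unfolding b_def by (meson ceiling_less_iff less_le_trans le_of_int_ceiling of_int_less_iff)
    ultimately show "j \<in> {a..<b}" by simp
  qed
  have "card A = card (f ` A)" using inj by (simp add: card_image)
  also have "\<dots> \<le> card {a..<b}" using sub by (intro card_mono) auto
  finally have "real (card A) \<le> real (nat (b - a))" by simp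
  also have "\<dots> \<le> 2 * N / m + 1"
  proof -
    have "of_int b < (of_int c + 2 * of_int N) / (of_int m :: real) + 1" unfolding b_def by linarith
    moreover have "of_int c / (of_int m :: real) \<le> of_int a" unfolding a_def by simp
    moreover have "(of_int c + 2 * of_int N) / (of_int m :: real) = of_int c / of_int m + 2 * N / m"
      by (simp add: add_divide_distrib)
    ultimately have "real_of_int (b - a) \<le> 2 * N / m + 1" by simp
    moreover have "0 \<le> 2 * N / m + 1" using m N by simp
    ultimately show ?thesis by (cases "b - a \<ge> 0") auto
  qed
  finally show ?thesis by (simp add: A_def)
qed

lemma count_u_slice:
  fixes n u e :: int
  assumes n: "n > 0"
  shows "real (card {x\<in>{0..<n}. n dvd u * (2*x + e + u)}) \<le> 2 * gcd n u + 1"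
proof -
  define g where "g = gcd n u"
  have g0: "g > 0" using n by (simp add: g_def)
  define m where "m = n div g"
  have nmg: "n = m * g" by (simp add: m_def g_def)
  have m0: "m > 0" using n g0 nmg by (simp add: zero_less_mult_iff) 
  have cop: "coprime m (u div g)" unfolding m_def g_def using n by (intro div_gcd_coprime) auto
  have ug: "u = (u div g) * g" by (simp add: g_def)
  have sub: "{x\<in>{0..<n}. n dvd u * (2*x + e + u)} \<subseteq> {x\<in>{0..<n}. m dvd 2*x + (e + u)}"
  proof (rule subsetI)
    fix x assume "x \<in> {x\<in>{0..<n}. n dvd u * (2*x + e + u)}"
    then have x: "0 \<le> x" "x < n" "n dvd u * (2*x + e + u)" by auto
    then have "m * g dvd ((u div g) * (2*x + e + u)) * g" using nmg ug
      by (metis mult.assoc mult.commute)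
    then have "m dvd (u div g) * (2*x + e + u)" using g0 by simp
    then have "m dvd 2*x + e + u" using cop by (simp add: coprime_dvd_mult_right_iff)
    then show "x \<in> {x\<in>{0..<n}. m dvd 2*x + (e + u)}" using x by (simp add: add.assoc)
  qed
  have "card {x\<in>{0..<n}. n dvd u * (2*x + e + u)} \<le> card {x\<in>{0..<n}. m dvd 2*x + (e + u)}"
    by (rule card_mono[OF finite_subset[of _ "{0..<n}"] sub]) auto
  then have "real (card {x\<in>{0..<n}. n dvd u * (2*x + e + u)}) \<le> 2 * n / m + 1"
    using count_mult_2[OF m0, of n "e + u"] n by linarith
  also have "2 * n / m = 2 * g" using nmg m0 by (simp add: field_simps)
  finally show ?thesis by (simp add: g_def)
qed

lemma card_multiples_below:
  fixes g n :: nat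
  assumes g: "g > 0" "g dvd n"
  shows "card {u\<in>{..<n}. g dvd u} = n div g"
proof -
  have "{u\<in>{..<n}. g dvd u} = (\<lambda>j. g * j) ` {..<n div g}"
  proof (rule set_eqI, rule iffI)
    fix u assume "u \<in> {u\<in>{..<n}. g dvd u}"
    then obtain j where "u = g * j" "g * j < n" by (auto elim!: dvdE)
    moreover have "n = g * (n div g)" using g by simp
    ultimately have "j < n div g" using g by (metis mult_less_cancel1)
    then show "u \<in> (\<lambda>j. g * j) ` {..<n div g}" using \<open>u = g * j\<close> by auto
  next
    fix u assume "u \<in> (\<lambda>j. g * j) ` {..<n div g}"
    then obtain j where "u = g * j" "j < n div g" by auto
    moreover have "n = g * (n div g)" using g by simp
    ultimately have "u < n" using g by (metis mult_less_cancel1)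
    then show "u \<in> {u\<in>{..<n}. g dvd u}" using \<open>u = g * j\<close> by auto
  qed
  moreover have "inj_on (\<lambda>j. g * j) {..<n div g}" using g by (auto intro: inj_onI)
  ultimately show ?thesis by (simp add: card_image)
qed

lemma sum_gcd_le:
  fixes n :: nat
  assumes n: "n > 0"
  shows "(\<Sum>u<n. gcd n u) \<le> n * card {g. g dvd n}"
proof -
  define Dv where "Dv = {g. g dvd n}"
  have fin: "finite Dv" unfolding Dv_def using n by (simp add: finite_divisors_nat)
  have "(\<Sum>u<n. gcd n u) \<le> (\<Sum>u<n. \<Sum>g\<in>Dv. if g dvd u then g else 0)"
  proof (rule sum_mono)
    fix u assume "u \<in> {..<n}"
    have "gcd n u \<in> Dv" by (simp add: Dv_def)
    then have "(if gcd n u dvd u then gcd n u else 0) \<le> (\<Sum>g\<in>Dv. if g dvd u then g else 0)"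
      by (intro member_le_sum fin) auto
    then show "gcd n u \<le> (\<Sum>g\<in>Dv. if g dvd u then g else 0)" by simp
  qed
  also have "\<dots> = (\<Sum>g\<in>Dv. \<Sum>u<n. if g dvd u then g else 0)" by (rule sum.swap)
  also have "\<dots> = (\<Sum>g\<in>Dv. g * card {u\<in>{..<n}. g dvd u})"
    by (intro sum.cong refl) (simp add: sum.If_cases Int_def)
  also have "\<dots> = (\<Sum>g\<in>Dv. n)"
  proof (intro sum.cong refl)
    fix g assume "g \<in> Dv"
    then have g: "g dvd n" by (simp add: Dv_def)
    then have "g > 0" using n by (auto intro: Nat.gr0I)
    then have "card {u\<in>{..<n}. g dvd u} = n div g" using g by (rule card_multiples_below)
    then show "g * card {u\<in>{..<n}. g dvd u} = n" using g by simp
  qed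
  also have "\<dots> = n * card Dv" by simp
  finally show ?thesis by (simp add: Dv_def)
qed

lemma card_divisors_le:
  fixes n :: nat
  assumes n: "n > 0"
  shows "real (card {g. g dvd n}) \<le> 2 * sqrt n"
proof -
  define Dv where "Dv = {g. g dvd n}"
  define D1 where "D1 = {g\<in>Dv. g * g \<le> n}"
  define D2 where "D2 = {g\<in>Dv. \<not> g * g \<le> n}"
  have fin: "finite Dv" unfolding Dv_def using n by (simp add: finite_divisors_nat)
  have "Dv = D1 \<union> D2" by (auto simp: D1_def D2_def)
  then have "card Dv \<le> card D1 + card D2" by (simp add: card_Un_le)
  have D1sub: "D1 \<subseteq> {1..nat \<lfloor>sqrt n\<rfloor>}"
  proof
    fix g assume "g \<in> D1"
    then have "g dvd n" "g * g \<le> n" by (auto simp: D1_def Dv_def)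
    then have "g \<ge> 1" using n by (auto intro: Nat.gr0I)
    have "real g * real g \<le> real n" using \<open>g * g \<le> n\<close> by (metis of_nat_le_iff of_nat_mult)
    then have "real g \<le> sqrt n" by (simp add: real_le_rsqrt power2_eq_square)
    then have "g \<le> nat \<lfloor>sqrt n\<rfloor>" by (simp add: le_nat_floor)
    then show "g \<in> {1..nat \<lfloor>sqrt n\<rfloor>}" using \<open>g \<ge> 1\<close> by simp
  qed
  have c1: "card D1 \<le> nat \<lfloor>sqrt n\<rfloor>" using card_mono[OF _ D1sub] by simp
  have "inj_on (\<lambda>g. n div g) D2"
  proof (rule inj_onI)
    fix g g' assume "g \<in> D2" "g' \<in> D2" "n div g = n div g'"
    then have "g dvd n" "g' dvd n" by (auto simp: D2_def Dv_def)
    then have e: "n = g * (n div g)" "n = g' * (n div g')" by simp_all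
    then have "g * (n div g) = g' * (n div g)" using \<open>n div g = n div g'\<close> by simp
    moreover have "n div g > 0" using e(1) n by (metis gr0I mult_0_right)
    ultimately show "g = g'" by simp
  qed
  moreover have "(\<lambda>g. n div g) ` D2 \<subseteq> D1"
  proof
    fix h assume "h \<in> (\<lambda>g. n div g) ` D2"
    then obtain g where g: "g \<in> D2" "h = n div g" by auto
    then have gd: "g dvd n" "n < g * g" by (auto simp: D2_def Dv_def)
    then have ng: "n = g * h" using g by simp
    have "h dvd n" using ng by simp
    moreover have "h * h \<le> n"
    proof -
      have "h < g"
      proof (rule ccontr)
        assume "\<not> h < g"
        then have "g * g \<le> g * h" by simp
        then show False using gd ng by simp
      qed
      then have "h * h \<le> g * h" by simp
      then show ?thesis using ng by simp
    qed
    ultimately show "h \<in> D1" by (simp add: D1_def Dv_def)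
  qed
  moreover have "finite D1" using fin by (simp add: D1_def)
  ultimately have "card D2 \<le> card D1"
    by (metis card_image card_mono)
  have "card Dv \<le> 2 * nat \<lfloor>sqrt n\<rfloor>" using \<open>card Dv \<le> _\<close> c1 \<open>card D2 \<le> card D1\<close> by linarith
  then have "real (card Dv) \<le> 2 * real (nat \<lfloor>sqrt n\<rfloor>)" by (metis of_nat_le_iff of_nat_mult of_nat_numeral)
  also have "real (nat \<lfloor>sqrt n\<rfloor>) \<le> sqrt n" by simp
  finally show ?thesis by (simp add: Dv_def)
qed

definition Tset :: "nat \<Rightarrow> int \<Rightarrow> nat \<Rightarrow> int \<Rightarrow> int set" where
  "Tset d \<Delta> n y = {x\<in>{0..<int n}. int n dvd Qf d x y - \<Delta>}"

lemma Qf_diff_x: "Qf d x2 y - Qf d x1 y = (x2 - x1) * (x2 + x1 + tw d * y)"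
  by (simp add: Qf_def algebra_simps power2_eq_square)

lemma Tset_sq:
  assumes n: "n > 0"
  shows "card (Tset d \<Delta> n y) ^ 2 \<le> card (SIGMA u:{0..<int n}. {x\<in>{0..<int n}. int n dvd u * (2*x + tw d * y + u)})"
proof -
  define T where "T = Tset d \<Delta> n y"
  define f where "f = (\<lambda>(x1::int, x2::int). ((x2 - x1) mod int n, x1))"
  have finT: "finite T" by (simp add: T_def Tset_def)
  have inj: "inj_on f (T \<times> T)"
  proof (rule inj_onI)
    fix p p' assume pp: "p \<in> T \<times> T" "p' \<in> T \<times> T" "f p = f p'"
    obtain x1 x2 where p: "p = (x1, x2)" by (cases p)
    obtain x1' x2' where p': "p' = (x1', x2')" by (cases p')
    have e: "x1 = x1'" "(x2 - x1) mod int n = (x2' - x1) mod int n" using pp(3) by (auto simp: f_def p p')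
    then have "int n dvd (x2 - x1) - (x2' - x1)" by (simp add: mod_eq_dvd_iff)
    then have "int n dvd x2 - x2'" by simp
    moreover have "0 \<le> x2" "x2 < int n" "0 \<le> x2'" "x2' < int n"
      using pp(1,2) by (auto simp: T_def Tset_def p p')
    ultimately have "x2 = x2'" using mod_eq_small by blast
    then show "p = p'" using e by (simp add: p p')
  qed
  have img: "f ` (T \<times> T) \<subseteq> (SIGMA u:{0..<int n}. {x\<in>{0..<int n}. int n dvd u * (2*x + tw d * y + u)})"
  proof (rule subsetI)
    fix p assume "p \<in> f ` (T \<times> T)"
    then obtain x1 x2 where x: "x1 \<in> T" "x2 \<in> T" and p: "p = f (x1, x2)" by auto
    define D where "D = x2 - x1"
    define E where "E = x2 + x1 + tw d * y"
    define q where "q = D div int n"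
    define u where "u = D mod int n"
    have uD: "u = D - int n * q" by (simp add: u_def q_def minus_div_mult_eq_mod[symmetric] algebra_simps)
    have "int n dvd Qf d x2 y - \<Delta>" "int n dvd Qf d x1 y - \<Delta>" using x by (auto simp: T_def Tset_def)
    then have "int n dvd (Qf d x2 y - \<Delta>) - (Qf d x1 y - \<Delta>)" by (rule dvd_diff)
    then have "int n dvd D * E" by (simp add: Qf_diff_x D_def E_def)
    moreover have "u * (2 * x1 + tw d * y + u) = D * E + int n * (int n * q * q - q * (D + E))"
      unfolding uD by (simp add: D_def E_def algebra_simps)
    ultimately have "int n dvd u * (2 * x1 + tw d * y + u)" by simp
    moreover have "0 \<le> u" "u < int n" using n by (simp_all add: u_def)
    moreover have "0 \<le> x1" "x1 < int n" using x by (auto simp: T_def Tset_def)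
    ultimately show "p \<in> (SIGMA u:{0..<int n}. {x\<in>{0..<int n}. int n dvd u * (2*x + tw d * y + u)})"
      by (simp add: p f_def u_def D_def)
  qed
  have "card T ^ 2 = card (T \<times> T)" by (simp add: power2_eq_square card_cartesian_product)
  also have "\<dots> = card (f ` (T \<times> T))" using inj by (simp add: card_image)
  also have "\<dots> \<le> card (SIGMA u:{0..<int n}. {x\<in>{0..<int n}. int n dvd u * (2*x + tw d * y + u)})"
    by (intro card_mono img) auto
  finally show ?thesis by (simp add: T_def)
qed

lemma Tset_sq_bound:
  assumes n: "n > 0"
  shows "real (card (Tset d \<Delta> n y)) ^ 2 \<le> 5 * real n * sqrt n"
proof -
  let ?S = "\<lambda>u. {x\<in>{0..<int n}. int n dvd u * (2*x + tw d * y + u)}"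
  have "real (card (Tset d \<Delta> n y)) ^ 2 \<le> real (card (SIGMA u:{0..<int n}. ?S u))"
  proof -
    have "card (Tset d \<Delta> n y) ^ 2 \<le> card (SIGMA u:{0..<int n}. ?S u)" by (rule Tset_sq[OF n])
    then have "real (card (Tset d \<Delta> n y) ^ 2) \<le> real (card (SIGMA u:{0..<int n}. ?S u))" by (simp only: of_nat_le_iff)
    then show ?thesis by (simp only: of_nat_power)
  qed
  also have "card (SIGMA u:{0..<int n}. ?S u) = (\<Sum>u\<in>{0..<int n}. card (?S u))"
    by (rule card_SigmaI) auto
  also have "real \<dots> = (\<Sum>u\<in>{0..<int n}. real (card (?S u)))" by simp
  also have "\<dots> \<le> (\<Sum>u\<in>{0..<int n}. 2 * real_of_int (gcd (int n) u) + 1)"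
  proof (rule sum_mono)
    fix u assume "u \<in> {0..<int n}"
    show "real (card (?S u)) \<le> 2 * real_of_int (gcd (int n) u) + 1"
      using count_u_slice[of "int n" u "tw d * y"] n by (simp add: add.assoc)
  qed
  also have "\<dots> = 2 * (\<Sum>u\<in>{0..<int n}. real_of_int (gcd (int n) u)) + real n"
    by (simp add: sum.distrib sum_distrib_left)
  also have "(\<Sum>u\<in>{0..<int n}. real_of_int (gcd (int n) u)) = (\<Sum>u<n. real (gcd n u))"
  proof -
    have "{0..<int n} = int ` {..<n}" by (metis atLeast0LessThan image_int_atLeastLessThan of_nat_0)
    then have "(\<Sum>u\<in>{0..<int n}. real_of_int (gcd (int n) u)) = (\<Sum>u\<in>{..<n}. real_of_int (gcd (int n) (int u)))"
      by (simp add: sum.reindex)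
    also have "\<dots> = (\<Sum>u<n. real (gcd n u))" by simp
    finally show ?thesis .
  qed
  also have "(\<Sum>u<n. real (gcd n u)) \<le> real n * real (card {g. g dvd n})"
  proof -
    have "real (\<Sum>u<n. gcd n u) \<le> real (n * card {g. g dvd n})" using sum_gcd_le[OF n] by (simp only: of_nat_le_iff)
    then show ?thesis by simp
  qed
  also have "\<dots> \<le> real n * (2 * sqrt n)" using card_divisors_le[OF n] by (intro mult_left_mono) auto
  finally have A: "real (card (Tset d \<Delta> n y)) ^ 2 \<le> 4 * real n * sqrt n + real n" by simp
  have B: "real n \<le> real n * sqrt n" using n by (simp add: mult_le_cancel_left1)
  show ?thesis using A B by linarith
qed

lemma card_Rset_sum:
  "card (Rset d \<Delta> n) = (\<Sum>y\<in>{0..<int n}. card (Tset d \<Delta> n y))"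
proof -
  have "bij_betw (\<lambda>(y, x). (x, y)) (SIGMA y:{0..<int n}. Tset d \<Delta> n y) (Rset d \<Delta> n)"
    by (rule bij_betwI[where g="\<lambda>(x, y). (y, x)"]) (auto simp: Rset_def Tset_def)
  then have "card (Rset d \<Delta> n) = card (SIGMA y:{0..<int n}. Tset d \<Delta> n y)"
    by (simp add: bij_betw_same_card)
  also have "\<dots> = (\<Sum>y\<in>{0..<int n}. card (Tset d \<Delta> n y))"
    by (rule card_SigmaI) (auto simp: Tset_def)
  finally show ?thesis .
qed

lemma Rset_bound:
  assumes n: "n > 0"
  shows "real (card (Rset d \<Delta> n)) \<le> 3 * real n powr (7/4)"
proof -
  let ?T = "\<lambda>y. real (card (Tset d \<Delta> n y))"
  have "real (card (Rset d \<Delta> n)) = (\<Sum>y\<in>{0..<int n}. ?T y)"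
    by (simp add: card_Rset_sum)
  then have "real (card (Rset d \<Delta> n)) ^ 2 \<le> (\<Sum>y\<in>{0..<int n}. (?T y)\<^sup>2) * card {0..<int n}"
    using sum_squared_le_sum_of_squares[of ?T "{0..<int n}"] by simp
  also have "\<dots> \<le> (\<Sum>y\<in>{0..<int n}. 5 * real n * sqrt n) * card {0..<int n}"
    by (intro mult_right_mono sum_mono Tset_sq_bound n) auto
  also have "\<dots> = 5 * real n * sqrt n * real n * real n" by simp
  also have "\<dots> \<le> (3 * real n powr (7/4)) ^ 2"
  proof -
    have "(3 * real n powr (7/4)) ^ 2 = 9 * real n powr (7/2)"
      by (simp add: power2_eq_square powr_add[symmetric] algebra_simps)
    also have "real n powr (7/2) = real n powr (3 + 1/2)" by simp
    also have "\<dots> = real n powr 3 * real n powr (1/2)" by (rule powr_add)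
    also have "\<dots> = real n ^ 3 * sqrt n" using n by (simp add: powr_numeral powr_half_sqrt)
    finally have "(3 * real n powr (7/4)) ^ 2 = 9 * (real n ^ 3 * sqrt n)" .
    moreover have "0 \<le> real n ^ 3 * sqrt n" by simp
    ultimately show ?thesis by (simp add: power3_eq_cube algebra_simps)
  qed
  finally show ?thesis by (rule power2_le_imp_le) simp
qed

lemma Z_summable:
  assumes d: "d > 0" and s: "s \<ge> 2"
  shows "summable (\<lambda>m. real (r_count d D (Suc m)) * real (Suc m) powr (- s - 1))"
proof (rule summable_comparison_test')
  show "summable (\<lambda>m. 3 * real (Suc m) powr (-5/4))"
    using summable_real_powr_iff[of "-5/4"] by (subst summable_Suc_iff) simp
  fix m :: nat assume "m \<ge> 0"
  have "r_count d D (Suc m) = card (Rset d (- D) (Suc m))"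
    using r_count_Rset[OF d, of "Suc m" "- D"] by simp
  then have "real (r_count d D (Suc m)) \<le> 3 * real (Suc m) powr (7/4)"
    using Rset_bound[of "Suc m" d "- D"] by simp
  then have "real (r_count d D (Suc m)) * real (Suc m) powr (- s - 1)
      \<le> 3 * real (Suc m) powr (7/4) * real (Suc m) powr (- s - 1)"
    by (intro mult_right_mono) auto
  also have "\<dots> = 3 * real (Suc m) powr (7/4 - s - 1)" by (simp add: powr_add[symmetric] algebra_simps)
  also have "\<dots> \<le> 3 * real (Suc m) powr (-5/4)" using s by (intro mult_left_mono powr_mono) auto
  finally show "norm (real (r_count d D (Suc m)) * real (Suc m) powr (- s - 1)) \<le> 3 * real (Suc m) powr (-5/4)"
    by simp
qed

lemma root_integral:
  fixes A B :: real and k :: nat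
  assumes A: "A > 0" and B: "B > 0" and k: "k > 0"
  shows "((\<lambda>t. pi * (A - root k t) / B) has_integral (pi * A ^ (k + 1) / (B * (k + 1)))) {0..A ^ k}"
proof -
  define F where "F t = pi / B * (A * t - real k / (real k + 1) * (t * root k t))" for t
  have "((\<lambda>t. pi * (A - root k t) / B) has_integral (F (A ^ k) - F 0)) {0..A ^ k}"
  proof (rule fundamental_theorem_of_calculus_interior)
    show "0 \<le> A ^ k" using A by simp
    show "continuous_on {0..A ^ k} F" unfolding F_def by (intro continuous_intros)
    fix t assume t: "t \<in> {0<..<A ^ k}"
    then have t0: "t > 0" by simp
    have r0: "root k t > 0" using t0 k by (simp add: real_root_gt_zero)
    have rk: "root k t ^ k = t" using t0 k by (simp add: real_root_pow_pos)
    have "((\<lambda>t. t * root k t) has_real_derivative (1 * root k t + inverse (real k * root k t ^ (k - Suc 0)) * t)) (at t)"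
      by (rule DERIV_mult[OF DERIV_ident DERIV_real_root[OF k t0]])
    moreover have "inverse (real k * root k t ^ (k - Suc 0)) * t = root k t / real k"
    proof -
      have "root k t ^ k = root k t * root k t ^ (k - Suc 0)" using k
        by (metis Suc_pred power_Suc)
      then have "t = root k t * root k t ^ (k - Suc 0)" using rk by simp
      then show ?thesis using r0 k by (simp add: field_simps)
    qed
    ultimately have d: "((\<lambda>t. t * root k t) has_real_derivative (root k t * (1 + 1 / real k))) (at t)"
      by (simp add: algebra_simps)
    have Fd: "(F has_real_derivative (pi / B * (A * 1 - real k / (real k + 1) * (root k t * (1 + 1 / real k))))) (at t)"
    proof -
      have d1: "((\<lambda>t. A * t) has_real_derivative A * 1) (at t)" by (rule DERIV_cmult[OF DERIV_ident])
      have d2: "((\<lambda>t. real k / (real k + 1) * (t * root k t)) has_real_derivative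
          real k / (real k + 1) * (root k t * (1 + 1 / real k))) (at t)" by (rule DERIV_cmult[OF d])
      note d3 = DERIV_diff[OF d1 d2]
      show ?thesis unfolding F_def by (rule DERIV_cmult[OF d3])
    qed
    have eq2: "pi / B * (A * 1 - real k / (real k + 1) * (root k t * (1 + 1 / real k))) = pi * (A - root k t) / B"
    proof -
      have kk: "real k > 0" using k by simp
      have n1: "real k \<noteq> 0" "real k + 1 \<noteq> 0" using kk by linarith+
      have h: "1 + 1 / real k = (real k + 1) / real k" using n1 by (simp add: field_simps)
      have e: "real k / (real k + 1) * (1 + 1 / real k) = 1" unfolding h using n1 by simp
      have "real k / (real k + 1) * (root k t * (1 + 1 / real k)) = root k t"
        by (simp only: mult.left_commute[of "real k / (real k + 1)"] e mult_1_right)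
      then show ?thesis by simp
    qed
    show "(F has_vector_derivative pi * (A - root k t) / B) (at t)"
      using Fd unfolding eq2 by (simp only: has_real_derivative_iff_has_vector_derivative)
  qed
  moreover have "F (A ^ k) - F 0 = pi * A ^ (k + 1) / (B * (k + 1))"
  proof -
    have "root k (A ^ k) = A" using A k by (simp add: real_root_power_cancel)
    then show ?thesis using k B by (simp add: F_def field_simps)
  qed
  ultimately show ?thesis by simp
qed

lemma disk_integral:
  fixes A B :: real and k :: nat
  assumes A: "A > 0" and B: "B > 0" and k: "k > 0"
  shows "(\<integral>\<^sup>+u. ennreal ((max 0 (A - B * (cmod u)\<^sup>2)) ^ k) \<partial>lborel) = ennreal (pi * A ^ (k + 1) / (B * (k + 1)))"
proof -
  define \<psi> where "\<psi> u = (max 0 (A - B * (cmod u)\<^sup>2)) ^ k" for u :: complex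
  define g where "g t = pi * (A - root k t) / B" for t
  have psi_meas[measurable]: "\<psi> \<in> borel_measurable borel"
    unfolding \<psi>_def by (intro borel_measurable_continuous_onI continuous_intros)
  have psi0: "\<psi> u \<ge> 0" for u by (simp add: \<psi>_def)
  have step1: "(\<integral>\<^sup>+u. ennreal (\<psi> u) \<partial>lborel) = (\<integral>\<^sup>+u. (\<integral>\<^sup>+t. indicator {0..<\<psi> u} t \<partial>lborel) \<partial>lborel)"
    using psi0 by (intro nn_integral_cong) simp
  have meas2: "(\<lambda>(u, t). indicator {0..<\<psi> u} t :: ennreal) \<in> borel_measurable (lborel \<Otimes>\<^sub>M lborel)"
  proof -
    have "(\<lambda>(u, t). indicator {0..<\<psi> u} t :: ennreal) = indicator {p. 0 \<le> snd p \<and> snd p < \<psi> (fst p)}"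
      by (auto simp: indicator_def fun_eq_iff)
    moreover have "{p \<in> space (lborel \<Otimes>\<^sub>M lborel). 0 \<le> snd p \<and> snd p < \<psi> (fst p)} \<in> sets (lborel \<Otimes>\<^sub>M lborel)"
      by measurable
    moreover have "space (lborel \<Otimes>\<^sub>M lborel) = (UNIV :: (complex \<times> real) set)" by (simp add: space_pair_measure)
    ultimately show ?thesis by simp
  qed
  have step2: "(\<integral>\<^sup>+u. (\<integral>\<^sup>+t. indicator {0..<\<psi> u} t \<partial>lborel) \<partial>lborel)
      = (\<integral>\<^sup>+t. (\<integral>\<^sup>+u. indicator {0..<\<psi> u} t \<partial>lborel) \<partial>lborel)"
    using lborel_pair.Fubini'[OF meas2] by simp
  have step3: "(\<integral>\<^sup>+u. indicator {0..<\<psi> u} t \<partial>lborel) = ennreal (g t) * indicator {0..A ^ k} t" for t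
  proof -
    have S_meas: "{u. 0 \<le> t \<and> t < \<psi> u} \<in> sets lborel"
    proof (cases "0 \<le> t")
      case True
      have "continuous_on UNIV \<psi>" unfolding \<psi>_def by (intro continuous_intros)
      then have "open (\<psi> -` {t<..})" by (intro open_vimage) auto
      moreover have "{u. 0 \<le> t \<and> t < \<psi> u} = \<psi> -` {t<..}" using True by auto
      ultimately show ?thesis by simp
    qed simp
    have "(\<integral>\<^sup>+u. indicator {0..<\<psi> u} t \<partial>lborel) = (\<integral>\<^sup>+u. indicator {u. 0 \<le> t \<and> t < \<psi> u} u \<partial>lborel)"
      by (intro nn_integral_cong) (simp add: indicator_def)
    also have "\<dots> = emeasure lborel {u. 0 \<le> t \<and> t < \<psi> u}" using S_meas by simp
    also have "\<dots> = ennreal (g t) * indicator {0..A ^ k} t"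
    proof (cases "0 \<le> t \<and> t < A ^ k")
      case True
      then have t0: "0 \<le> t" and tA: "t < A ^ k" by auto
      have rt0: "root k t \<ge> 0" using t0 by (simp add: real_root_ge_zero)
      have "root k t < root k (A ^ k)" using tA k by simp
      then have rtA: "root k t < A" using A k by (simp add: real_root_power_cancel)
      define r where "r = sqrt ((A - root k t) / B)"
      have r0: "r \<ge> 0" using rtA B by (simp add: r_def)
      have r2: "r ^ 2 = (A - root k t) / B" using rtA B by (simp add: r_def)
      have "{u. 0 \<le> t \<and> t < \<psi> u} = ball 0 r"
      proof (rule set_eqI)
        fix u :: complex
        have "t < \<psi> u \<longleftrightarrow> root k t < max 0 (A - B * (cmod u)\<^sup>2)"
        proof -
          have "root k (\<psi> u) = max 0 (A - B * (cmod u)\<^sup>2)"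
            unfolding \<psi>_def using k by (simp add: real_root_power_cancel)
          moreover have "root k t < root k (\<psi> u) \<longleftrightarrow> t < \<psi> u" using k by (rule real_root_less_iff)
          ultimately show ?thesis by simp
        qed
        also have "\<dots> \<longleftrightarrow> root k t < A - B * (cmod u)\<^sup>2" using rt0 by auto
        also have "\<dots> \<longleftrightarrow> (cmod u)\<^sup>2 < r ^ 2" unfolding r2 using B by (simp add: field_simps)
        also have "\<dots> \<longleftrightarrow> cmod u < r"
        proof
          assume "(cmod u)\<^sup>2 < r ^ 2" then show "cmod u < r" using r0 by (rule power_less_imp_less_base)
        next
          assume "cmod u < r" then show "(cmod u)\<^sup>2 < r ^ 2" by (intro power_strict_mono) auto
        qed
        finally show "u \<in> {u. 0 \<le> t \<and> t < \<psi> u} \<longleftrightarrow> u \<in> ball 0 r" using t0 by (simp add: dist_norm)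
      qed
      then have "emeasure lborel {u. 0 \<le> t \<and> t < \<psi> u} = ennreal (unit_ball_vol (DIM(complex)) * r ^ DIM(complex))"
        using emeasure_ball[OF r0, where c="0::complex"] by simp
      also have "\<dots> = ennreal (g t)" by (simp add: unit_ball_vol_2 r2 g_def)
      finally show ?thesis using True by simp
    next
      case False
      have "{u. 0 \<le> t \<and> t < \<psi> u} = {}"
      proof -
        have bnd: "\<psi> u \<le> A ^ k" for u unfolding \<psi>_def using A B by (intro power_mono) auto
        have "\<not> (0 \<le> t \<and> t < \<psi> u)" for u
        proof
          assume "0 \<le> t \<and> t < \<psi> u"
          then have "0 \<le> t \<and> t < A ^ k" using bnd[of u] by linarith
          with False show False by blast
        qed
        then show ?thesis by blast
      qed
      moreover have "ennreal (g t) * indicator {0..A ^ k} t = 0"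
      proof (cases "t = A ^ k")
        case True
        then have "root k t = A" using A k by (simp add: real_root_power_cancel)
        then show ?thesis by (simp add: g_def)
      qed (use False in auto)
      ultimately show ?thesis by (simp only: emeasure_empty)
    qed
    finally show ?thesis .
  qed
  have g0: "0 \<le> g t" if "t \<in> {0..A ^ k}" for t
  proof -
    have "root k t \<le> root k (A ^ k)" using that k by simp
    then have "root k t \<le> A" using A k by (simp add: real_root_power_cancel)
    then show ?thesis using B by (simp add: g_def)
  qed
  have "(\<integral>\<^sup>+u. ennreal ((max 0 (A - B * (cmod u)\<^sup>2)) ^ k) \<partial>lborel) = (\<integral>\<^sup>+u. ennreal (\<psi> u) \<partial>lborel)"
    by (simp add: \<psi>_def)
  also have "\<dots> = (\<integral>\<^sup>+t. ennreal (g t) * indicator {0..A ^ k} t \<partial>lborel)"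
    using step1 step2 step3 by simp
  also have "\<dots> = ennreal (pi * A ^ (k + 1) / (B * (k + 1)))"
  proof -
    have gi: "(g has_integral pi * A ^ (k + 1) / (B * (k + 1))) {0..A ^ k}"
      unfolding g_def by (rule root_integral[OF A B k])
    show ?thesis using nn_integral_has_integral_lebesgue'[OF g0 gi] by simp
  qed
  finally show ?thesis .
qed

lemma nn_integral_translate:
  fixes c :: complex and f :: "complex \<Rightarrow> ennreal"
  assumes [measurable]: "f \<in> borel_measurable borel"
  shows "(\<integral>\<^sup>+z. f (z + c) \<partial>lborel) = (\<integral>\<^sup>+z. f z \<partial>lborel)"
proof -
  have "(\<integral>\<^sup>+z. f z \<partial>lborel) = (\<integral>\<^sup>+z. f z \<partial>(distr lborel borel ((+) c)))"
    by (simp add: lborel_distr_plus)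
  also have "\<dots> = (\<integral>\<^sup>+z. f (c + z) \<partial>lborel)" by (subst nn_integral_distr) auto
  finally show ?thesis by (simp add: add.commute)
qed

lemma cy_meas[measurable]: "cy d \<in> borel_measurable borel"
  unfolding cy_def by measurable

lemma cx_meas[measurable]: "cx d \<in> borel_measurable borel"
  unfolding cx_def by measurable

lemma Par_meas:
  assumes "d > 0"
  shows "Par d \<in> sets borel"
proof -
  have e: "Par d = {z \<in> space borel. 0 \<le> cx d z \<and> cx d z < 1 \<and> 0 \<le> cy d z \<and> cy d z < 1}"
    unfolding Par_coord[OF assms] by simp
  have "{z \<in> space borel. 0 \<le> cx d z \<and> cx d z < 1 \<and> 0 \<le> cy d z \<and> cy d z < 1} \<in> sets borel"
    by measurable
  then show ?thesis unfolding e .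
qed

lemma floor_slot: "0 \<le> x + of_int p \<and> x + of_int p < 1 \<longleftrightarrow> p = - \<lfloor>x::real\<rfloor>"
proof -
  have "0 \<le> x + of_int p \<and> x + of_int p < 1 \<longleftrightarrow> \<lfloor>x + of_int p\<rfloor> = 0"
    using floor_eq_iff[of "x + of_int p" 0] by simp
  also have "\<lfloor>x + of_int p\<rfloor> = \<lfloor>x\<rfloor> + p" by simp
  finally show ?thesis by auto
qed

lemma Par_translate_unique:
  assumes d: "d > 0"
  shows "(\<integral>\<^sup>+pq. indicator (Par d) (z + lat d (fst pq) (snd pq)) \<partial>count_space UNIV) = 1"
proof -
  define p0 where "p0 = - \<lfloor>cx d z\<rfloor>"
  define q0 where "q0 = - \<lfloor>cy d z\<rfloor>"
  have "(\<lambda>pq. indicator (Par d) (z + lat d (fst pq) (snd pq)) :: ennreal) = indicator {(p0, q0)}"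
  proof
    fix pq :: "int \<times> int"
    obtain p q where pq: "pq = (p, q)" by (cases pq)
    have "z + lat d p q \<in> Par d \<longleftrightarrow> (0 \<le> cx d z + of_int p \<and> cx d z + of_int p < 1) \<and> (0 \<le> cy d z + of_int q \<and> cy d z + of_int q < 1)"
      using d by (simp add: Par_coord cx_add cy_add cx_lat cy_lat)
    also have "\<dots> \<longleftrightarrow> pq = (p0, q0)" unfolding floor_slot by (simp add: pq p0_def q0_def)
    finally show "indicator (Par d) (z + lat d (fst pq) (snd pq)) = (indicator {(p0, q0)} pq :: ennreal)"
      by (simp add: indicator_def pq)
  qed
  then show ?thesis by simp
qed

lemma tiling:
  fixes g :: "complex \<Rightarrow> ennreal"
  assumes d: "d > 0" and [measurable]: "g \<in> borel_measurable borel"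
  shows "(\<integral>\<^sup>+pq. (\<integral>\<^sup>+z. g (z - lat d (fst pq) (snd pq)) * indicator (Par d) z \<partial>lborel) \<partial>count_space UNIV)
         = (\<integral>\<^sup>+z. g z \<partial>lborel)"
proof -
  note Par_meas[OF d, measurable]
  have "(\<integral>\<^sup>+z. g (z - lat d p q) * indicator (Par d) z \<partial>lborel)
        = (\<integral>\<^sup>+z. g z * indicator (Par d) (z + lat d p q) \<partial>lborel)" for p q
    using nn_integral_translate[of "\<lambda>z. g (z - lat d p q) * indicator (Par d) z" "lat d p q"] by simp
  then have "(\<integral>\<^sup>+pq. (\<integral>\<^sup>+z. g (z - lat d (fst pq) (snd pq)) * indicator (Par d) z \<partial>lborel) \<partial>count_space UNIV)
      = (\<integral>\<^sup>+pq. (\<integral>\<^sup>+z. g z * indicator (Par d) (z + lat d (fst pq) (snd pq)) \<partial>lborel) \<partial>count_space UNIV)"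
    by simp
  also have "\<dots> = (\<integral>\<^sup>+z. (\<integral>\<^sup>+pq. g z * indicator (Par d) (z + lat d (fst pq) (snd pq)) \<partial>count_space UNIV) \<partial>lborel)"
    by (rule nn_integral_count_space_nn_integral[symmetric]) auto
  also have "\<dots> = (\<integral>\<^sup>+z. g z * (\<integral>\<^sup>+pq. indicator (Par d) (z + lat d (fst pq) (snd pq)) \<partial>count_space UNIV) \<partial>lborel)"
    by (simp add: nn_integral_cmult)
  also have "\<dots> = (\<integral>\<^sup>+z. g z \<partial>lborel)" by (simp add: Par_translate_unique[OF d])
  finally show ?thesis .
qed

lemma infsum_enn2real:
  fixes f :: "'a \<Rightarrow> real"
  assumes nn: "\<And>x. x \<in> A \<Longrightarrow> 0 \<le> f x"
  shows "infsum f A = enn2real (\<integral>\<^sup>+x. ennreal (f x) \<partial>count_space A)"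
proof (cases "f summable_on A")
  case True
  then have ns: "(\<lambda>x. norm (f x)) summable_on A"
    using nn by (metis (no_types, lifting) real_norm_def abs_of_nonneg summable_on_cong)
  note abs = abs_summable_equivalent[of f A, THEN iffD1, OF ns]
  have "(\<integral>\<^sup>+x. ennreal (f x) \<partial>count_space A) = ennreal (infsetsum f A)"
    using nn_integral_conv_infsetsum[OF abs nn] by simp
  moreover have "infsetsum f A = infsum f A" by (rule infsetsum_infsum[OF abs])
  moreover have "infsum f A \<ge> 0" using nn by (simp add: infsum_nonneg)
  ultimately show ?thesis by simp
next
  case False
  have "(\<integral>\<^sup>+x. ennreal (f x) \<partial>count_space A) = \<infinity>"
  proof (rule ccontr)
    assume fin: "(\<integral>\<^sup>+x. ennreal (f x) \<partial>count_space A) \<noteq> \<infinity>"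
    have int: "integrable (count_space A) f"
    proof (rule integrableI_bounded)
      show "f \<in> borel_measurable (count_space A)" by simp
      have "(\<integral>\<^sup>+x. ennreal (norm (f x)) \<partial>count_space A) = (\<integral>\<^sup>+x. ennreal (f x) \<partial>count_space A)"
        using nn by (intro nn_integral_cong) simp
      then show "(\<integral>\<^sup>+x. ennreal (norm (f x)) \<partial>count_space A) < \<infinity>" using fin by (simp add: less_top)
    qed
    have ns: "(\<lambda>x. norm (f x)) summable_on A"
      using abs_summable_equivalent[of f A] int by (simp add: abs_summable_on_def)
    have "f summable_on A" by (rule abs_summable_summable[OF ns])
    with False show False by simp
  qed
  moreover have "infsum f A = 0" using False by (simp add: infsum_def)
  ultimately show ?thesis by simp
qed

lemma meas_count_sum:
  fixes f :: "'i \<Rightarrow> 'a \<Rightarrow> ennreal"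
  assumes I: "countable I" and meas: "\<And>i. i \<in> I \<Longrightarrow> f i \<in> borel_measurable M"
  shows "(\<lambda>x. \<integral>\<^sup>+i. f i x \<partial>count_space I) \<in> borel_measurable M"
proof (cases "finite I")
  case True
  then have "(\<lambda>x. \<integral>\<^sup>+i. f i x \<partial>count_space I) = (\<lambda>x. \<Sum>i\<in>I. f i x)"
    by (simp add: nn_integral_count_space_finite)
  moreover have "(\<lambda>x. \<Sum>i\<in>I. f i x) \<in> borel_measurable M"
    using meas by (intro borel_measurable_sum) auto
  ultimately show ?thesis by simp
next
  case False
  then have [simp]: "I \<noteq> {}" by auto
  note * = bij_betw_from_nat_into[OF I False]
  have "(\<lambda>x. \<integral>\<^sup>+i. f i x \<partial>count_space I) = (\<lambda>x. \<Sum>n. f (from_nat_into I n) x)"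
    by (simp add: nn_integral_bij_count_space[symmetric, OF *] nn_integral_count_space_nat)
  moreover have "(\<lambda>x. \<Sum>n. f (from_nat_into I n) x) \<in> borel_measurable M"
  proof -
    have [measurable]: "f (from_nat_into I n) \<in> borel_measurable M" for n
      using meas from_nat_into[of I n] by auto
    show ?thesis by measurable
  qed
  ultimately show ?thesis by simp
qed

lemma nn_integral_count_pair:
  fixes f :: "'a \<times> 'b \<Rightarrow> ennreal"
  shows "(\<integral>\<^sup>+p. f p \<partial>count_space UNIV) = (\<integral>\<^sup>+a. (\<integral>\<^sup>+b. f (a, b) \<partial>count_space UNIV) \<partial>count_space UNIV)"
  by (rule nn_integral_fst_count_space[symmetric])

definition Sset :: "nat \<Rightarrow> int \<Rightarrow> (int \<times> complex \<times> int) set" where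
  "Sset d \<Delta> = {(a, b, c). b \<in> Od d \<and> b * cnj b - of_int (a * c) = of_int \<Delta> \<and> a < 0}"

definition Uset :: "nat \<Rightarrow> int \<Rightarrow> (nat \<times> (int \<times> int) \<times> (int \<times> int)) set" where
  "Uset d \<Delta> = {u. fst (snd u) \<in> Rset d \<Delta> (Suc (fst u))}"

definition Phi :: "nat \<Rightarrow> int \<Rightarrow> nat \<times> (int \<times> int) \<times> (int \<times> int) \<Rightarrow> int \<times> complex \<times> int" where
  "Phi d \<Delta> u = (case u of (m, (x0, y0), (p, q)) \<Rightarrow>
     (let n = int (Suc m); x = x0 + n * p; y = y0 + n * q in (- n, cnj (lat d x y), (\<Delta> - Qf d x y) div n)))"

lemma Phi_bij:
  assumes d: "d > 0"
  shows "bij_betw (Phi d \<Delta>) (Uset d \<Delta>) (Sset d \<Delta>)"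
proof (rule bij_betw_imageI)
  show "inj_on (Phi d \<Delta>) (Uset d \<Delta>)"
  proof (rule inj_onI)
    fix u u' assume u: "u \<in> Uset d \<Delta>" "u' \<in> Uset d \<Delta>" and eq: "Phi d \<Delta> u = Phi d \<Delta> u'"
    obtain m x0 y0 p q where u_def: "u = (m, (x0, y0), (p, q))" by (cases u) auto
    obtain m' x0' y0' p' q' where u'_def: "u' = (m', (x0', y0'), (p', q'))" by (cases u') auto
    have e1: "int (Suc m) = int (Suc m')" and
      e2: "cnj (lat d (x0 + int (Suc m) * p) (y0 + int (Suc m) * q)) = cnj (lat d (x0' + int (Suc m') * p') (y0' + int (Suc m') * q'))"
      using eq by (auto simp: Phi_def u_def u'_def Let_def)
    then have mm: "m' = m" by simp
    define n where "n = int (Suc m)"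
    have "x0 + n * p = x0' + n * p'" "y0 + n * q = y0' + n * q'"
      using e2 lat_inj[OF d] unfolding mm n_def by (metis complex_cnj_cnj)+
    moreover have r: "(x0, y0) \<in> Rset d \<Delta> (Suc m)" "(x0', y0') \<in> Rset d \<Delta> (Suc m)"
      using u by (auto simp: Uset_def u_def u'_def mm)
    ultimately have "x0 = x0'" "y0 = y0'"
    proof -
      have "n dvd x0 - x0'" using \<open>x0 + n * p = x0' + n * p'\<close>
        by (metis dvd_triv_left eq_diff_eq add_diff_cancel_left' right_diff_distrib' diff_diff_eq2 add.commute)
      moreover have "n dvd y0 - y0'" using \<open>y0 + n * q = y0' + n * q'\<close>
        by (metis dvd_triv_left eq_diff_eq add_diff_cancel_left' right_diff_distrib' diff_diff_eq2 add.commute)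
      moreover have "0 \<le> x0" "x0 < n" "0 \<le> y0" "y0 < n" "0 \<le> x0'" "x0' < n" "0 \<le> y0'" "y0' < n"
        using r by (auto simp: Rset_def n_def)
      ultimately show "x0 = x0'" "y0 = y0'" using mod_eq_small by blast+
    qed
    moreover have "n > 0" by (simp add: n_def)
    ultimately have "p = p'" "q = q'"
      using \<open>x0 + n * p = x0' + n * p'\<close> \<open>y0 + n * q = y0' + n * q'\<close> by simp_all
    then show "u = u'" using \<open>x0 = x0'\<close> \<open>y0 = y0'\<close> mm by (simp add: u_def u'_def)
  qed
  show "Phi d \<Delta> ` Uset d \<Delta> = Sset d \<Delta>"
  proof (rule set_eqI, rule iffI)
    fix t assume "t \<in> Phi d \<Delta> ` Uset d \<Delta>"
    then obtain m x0 y0 p q where u: "(m, (x0, y0), (p, q)) \<in> Uset d \<Delta>" and t: "t = Phi d \<Delta> (m, (x0, y0), (p, q))"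
      by auto
    define n where "n = int (Suc m)"
    define x where "x = x0 + n * p"
    define y where "y = y0 + n * q"
    have n0: "n > 0" by (simp add: n_def)
    have "n dvd Qf d x0 y0 - \<Delta>" using u by (simp add: Uset_def Rset_def n_def)
    moreover have "n dvd Qf d x y - Qf d x0 y0" by (rule Qf_cong) (simp_all add: x_def y_def)
    ultimately have "n dvd Qf d x y - \<Delta>" by (metis dvd_add diff_add_cancel add.commute add_diff_eq)
    then have dv: "n dvd \<Delta> - Qf d x y" by (metis dvd_minus_iff minus_diff_eq)
    define c where "c = (\<Delta> - Qf d x y) div n"
    have nc: "n * c = \<Delta> - Qf d x y" using dv by (simp add: c_def)
    have t': "t = (- n, cnj (lat d x y), c)" by (simp add: t Phi_def n_def x_def y_def c_def Let_def)
    have "cnj (lat d x y) * cnj (cnj (lat d x y)) = of_int (Qf d x y)"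
      using lat_norm[of d x y] by (simp add: mult.commute)
    then have "cnj (lat d x y) * cnj (cnj (lat d x y)) - of_int (- n * c) = of_int \<Delta>"
      using nc by (simp flip: of_int_mult of_int_diff of_int_minus)
    moreover have "cnj (lat d x y) \<in> Od d" by (simp add: cnj_lat)
    ultimately show "t \<in> Sset d \<Delta>" using n0 by (simp add: Sset_def t')
  next
    fix t assume "t \<in> Sset d \<Delta>"
    then obtain a b c where t: "t = (a, b, c)" and b: "b \<in> Od d" and eq: "b * cnj b - of_int (a * c) = of_int \<Delta>" and a: "a < 0"
      by (auto simp: Sset_def)
    obtain x' y' where "b = lat d x' y'" using b by (auto elim: Od_cases)
    then obtain x y where bx: "cnj b = lat d x y" by (metis cnj_lat)
    define m where "m = nat (- a) - 1"
    define n where "n = int (Suc m)"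
    have na: "n = - a" using a by (simp add: n_def m_def)
    have n0: "n > 0" by (simp add: n_def)
    have "b * cnj b = of_int (Qf d x y)" using lat_norm[of d x y] bx
      by (metis complex_cnj_cnj mult.commute)
    then have "(of_int (Qf d x y + n * c) :: complex) = of_int \<Delta>" using eq na by simp
    then have Qc: "Qf d x y + n * c = \<Delta>" by (simp only: of_int_eq_iff)
    define x0 where "x0 = x mod n"
    define y0 where "y0 = y mod n"
    define p where "p = x div n"
    define q where "q = y div n"
    have xs: "x = x0 + n * p" "y = y0 + n * q" by (simp_all add: x0_def p_def y0_def q_def)
    have "n dvd Qf d x0 y0 - Qf d x y" by (rule Qf_cong) (simp_all add: xs)
    moreover have "n dvd Qf d x y - \<Delta>" using Qc by (metis dvd_triv_left minus_diff_eq dvd_minus_iff add_diff_cancel_left')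
    ultimately have "n dvd Qf d x0 y0 - \<Delta>" by (metis dvd_add diff_add_cancel add.commute add_diff_eq)
    then have "(x0, y0) \<in> Rset d \<Delta> (Suc m)" using n0 by (simp add: Rset_def x0_def y0_def n_def)
    then have u: "(m, (x0, y0), (p, q)) \<in> Uset d \<Delta>" by (simp add: Uset_def)
    have "c = (\<Delta> - Qf d x y) div n" using Qc n0 by (metis add_diff_cancel_left' nonzero_mult_div_cancel_left less_irrefl)
    moreover have "Phi d \<Delta> (m, (x0, y0), (p, q)) = (- n, cnj (lat d x y), (\<Delta> - Qf d x y) div n)"
      by (simp only: Phi_def prod.case Let_def n_def[symmetric] xs[symmetric])
    moreover have "cnj (lat d x y) = b" using bx by (metis complex_cnj_cnj)
    ultimately have "Phi d \<Delta> (m, (x0, y0), (p, q)) = (a, b, c)" using na by simp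
    then show "t \<in> Phi d \<Delta> ` Uset d \<Delta>" using u t by (metis image_eqI)
  qed
qed

definition fz :: "nat \<Rightarrow> complex \<Rightarrow> int \<times> complex \<times> int \<Rightarrow> real" where
  "fz k z = (\<lambda>(a, b, c). max 0 ((Re (of_int a * complex_of_real ((cmod z)\<^sup>2) + b * z + cnj b * cnj z + of_int c)) ^ k))"

definition psi :: "real \<Rightarrow> real \<Rightarrow> nat \<Rightarrow> complex \<Rightarrow> real" where
  "psi A B k u = (max 0 (A - B * (cmod u)\<^sup>2)) ^ k"

lemma Hfun_eq: "Hfun d k \<Delta> z = infsum (fz k z) (Sset d \<Delta>)"
  by (simp add: Hfun_def fz_def Sset_def)

lemma max_odd_pow: "odd k \<Longrightarrow> max 0 (v ^ k) = (max 0 (v::real)) ^ k"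
proof (cases "v \<ge> 0")
  case False
  assume k: "odd k"
  then have "v ^ k < 0" using False by (simp add: power_less_zero_eq)
  moreover have "k > 0" using k by (auto intro: Nat.gr0I)
  ultimately show ?thesis using False by simp
qed simp

lemma Re_form:
  fixes g z :: complex and n c Q \<Delta> :: real
  assumes n: "n > 0" and Q: "Re g ^ 2 + Im g ^ 2 = Q" and c: "n * c = \<Delta> - Q"
  shows "Re (complex_of_real (- n) * complex_of_real ((cmod z)\<^sup>2) + cnj g * z + cnj (cnj g) * cnj z + complex_of_real c)
       = \<Delta> / n - n * (cmod (z - g / complex_of_real n))\<^sup>2"
proof -
  have cc: "c = \<Delta> / n - Q / n" using c n by (simp add: field_simps)
  have "(cmod (z - g / complex_of_real n))\<^sup>2 = (Re z - Re g / n)\<^sup>2 + (Im z - Im g / n)\<^sup>2"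
    by (simp add: cmod_power2)
  also have "\<dots> = (Re z)\<^sup>2 + (Im z)\<^sup>2 - 2 * (Re z * Re g + Im z * Im g) / n + (Re g ^ 2 + Im g ^ 2) / n ^ 2"
    using n by (simp add: field_simps power2_eq_square)
  finally have e: "(cmod (z - g / complex_of_real n))\<^sup>2 = (Re z)\<^sup>2 + (Im z)\<^sup>2 - 2 * (Re z * Re g + Im z * Im g) / n + Q / n ^ 2"
    using Q by simp
  have cz: "(cmod z)\<^sup>2 = (Re z)\<^sup>2 + (Im z)\<^sup>2" by (simp add: cmod_power2)
  show ?thesis unfolding e cc cz using n
    by (simp add: field_simps power2_eq_square)
qed

lemma lat_shift: "lat d (x0 + n * p) (y0 + n * q) = lat d x0 y0 + of_int n * lat d p q"
  by (simp add: lat_def algebra_simps)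

lemma fz_Phi:
  assumes d: "d > 0" and k: "odd k" and u: "(m, (x0, y0), (p, q)) \<in> Uset d \<Delta>"
  shows "fz k z (Phi d \<Delta> (m, (x0, y0), (p, q)))
       = psi (\<Delta> / real (Suc m)) (real (Suc m)) k (z - lat d p q - lat d x0 y0 / of_nat (Suc m))"
proof -
  define n where "n = int (Suc m)"
  define x where "x = x0 + n * p"
  define y where "y = y0 + n * q"
  have n0: "n > 0" by (simp add: n_def)
  have "n dvd Qf d x0 y0 - \<Delta>" using u by (simp add: Uset_def Rset_def n_def)
  moreover have "n dvd Qf d x y - Qf d x0 y0" by (rule Qf_cong) (simp_all add: x_def y_def)
  ultimately have "n dvd Qf d x y - \<Delta>" by (metis dvd_add diff_add_cancel add.commute add_diff_eq)
  then have dv: "n dvd \<Delta> - Qf d x y" by (metis dvd_minus_iff minus_diff_eq)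
  define c where "c = (\<Delta> - Qf d x y) div n"
  have nc: "n * c = \<Delta> - Qf d x y" using dv by (simp add: c_def)
  have Ph: "Phi d \<Delta> (m, (x0, y0), (p, q)) = (- n, cnj (lat d x y), c)"
    by (simp only: Phi_def prod.case Let_def n_def[symmetric] x_def[symmetric] y_def[symmetric] c_def)
  define g where "g = lat d x y"
  have Qg: "Re g ^ 2 + Im g ^ 2 = real_of_int (Qf d x y)"
  proof -
    have "Re (g * cnj g) = real_of_int (Qf d x y)" using lat_norm[of d x y] by (simp add: g_def)
    then show ?thesis by (simp add: power2_eq_square)
  qed
  have ncr: "real_of_int n * real_of_int c = real_of_int \<Delta> - real_of_int (Qf d x y)"
    using nc by (metis of_int_diff of_int_mult)
  have "Re (of_int (- n) * complex_of_real ((cmod z)\<^sup>2) + cnj g * z + cnj (cnj g) * cnj z + of_int c)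
      = Re (complex_of_real (- real_of_int n) * complex_of_real ((cmod z)\<^sup>2) + cnj g * z + cnj (cnj g) * cnj z + complex_of_real (real_of_int c))"
    by simp
  also have "\<dots> = real_of_int \<Delta> / real_of_int n - real_of_int n * (cmod (z - g / complex_of_real (real_of_int n)))\<^sup>2"
    using n0 Qg ncr by (intro Re_form) auto
  also have "g / complex_of_real (real_of_int n) = lat d p q + lat d x0 y0 / of_nat (Suc m)"
  proof -
    have "g = lat d x0 y0 + of_int n * lat d p q" by (simp add: g_def x_def y_def lat_shift)
    moreover have "complex_of_real (real_of_int n) = of_int n" by simp
    moreover have "(of_int n :: complex) \<noteq> 0" using n0 by simp
    ultimately have "g / complex_of_real (real_of_int n) = lat d p q + lat d x0 y0 / of_int n"
      by (simp add: field_simps)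
    moreover have "(of_int n :: complex) = of_nat (Suc m)" by (simp add: n_def)
    ultimately show ?thesis by simp
  qed
  finally have R: "Re (of_int (- n) * complex_of_real ((cmod z)\<^sup>2) + cnj g * z + cnj (cnj g) * cnj z + of_int c)
      = \<Delta> / real (Suc m) - real (Suc m) * (cmod (z - lat d p q - lat d x0 y0 / of_nat (Suc m)))\<^sup>2"
    by (simp add: n_def diff_diff_eq)
  have "fz k z (Phi d \<Delta> (m, (x0, y0), (p, q))) = max 0 ((Re (of_int (- n) * complex_of_real ((cmod z)\<^sup>2) + cnj g * z + cnj (cnj g) * cnj z + of_int c)) ^ k)"
    by (simp only: fz_def Ph prod.case g_def)
  also have "\<dots> = psi (\<Delta> / real (Suc m)) (real (Suc m)) k (z - lat d p q - lat d x0 y0 / of_nat (Suc m))"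
    by (simp only: R psi_def max_odd_pow[OF k])
  finally show ?thesis .
qed

lemma fz_meas: "(\<lambda>z. ennreal (fz k z t)) \<in> borel_measurable borel"
proof -
  obtain a b c where t: "t = (a, b, c)" by (cases t) auto
  have "continuous_on UNIV (\<lambda>z. fz k z t)"
    unfolding t fz_def by (simp add: case_prod_beta) (intro continuous_intros)
  then have "(\<lambda>z. fz k z t) \<in> borel_measurable borel" by (rule borel_measurable_continuous_onI)
  then show ?thesis by measurable
qed

lemma psi_meas: "(\<lambda>z. ennreal (psi A B k (z - w))) \<in> borel_measurable borel"
proof -
  have "continuous_on UNIV (\<lambda>z. psi A B k (z - w))"
    unfolding psi_def by (intro continuous_intros)
  then have "(\<lambda>z. psi A B k (z - w)) \<in> borel_measurable borel" by (rule borel_measurable_continuous_onI)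
  then show ?thesis by measurable
qed

lemma inner_value:
  assumes d: "d > 0" and \<Delta>: "\<Delta> > 0" and k: "k > 0"
  shows "(\<integral>\<^sup>+pq. (\<integral>\<^sup>+z. ennreal (psi (\<Delta> / real (Suc m)) (real (Suc m)) k (z - lat d (fst pq) (snd pq) - w)) * indicator (Par d) z \<partial>lborel) \<partial>count_space UNIV)
       = ennreal (pi * (\<Delta> / real (Suc m)) ^ (k + 1) / (real (Suc m) * (k + 1)))"
proof -
  define g where "g v = ennreal (psi (\<Delta> / real (Suc m)) (real (Suc m)) k (v - w))" for v
  have gm: "g \<in> borel_measurable borel" unfolding g_def by (rule psi_meas)
  have "(\<integral>\<^sup>+pq. (\<integral>\<^sup>+z. ennreal (psi (\<Delta> / real (Suc m)) (real (Suc m)) k (z - lat d (fst pq) (snd pq) - w)) * indicator (Par d) z \<partial>lborel) \<partial>count_space UNIV)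
      = (\<integral>\<^sup>+pq. (\<integral>\<^sup>+z. g (z - lat d (fst pq) (snd pq)) * indicator (Par d) z \<partial>lborel) \<partial>count_space UNIV)"
    by (simp add: g_def)
  also have "\<dots> = (\<integral>\<^sup>+z. g z \<partial>lborel)" by (rule tiling[OF d gm])
  also have "\<dots> = (\<integral>\<^sup>+z. ennreal (psi (\<Delta> / real (Suc m)) (real (Suc m)) k z) \<partial>lborel)"
  proof -
    have m: "(\<lambda>z. ennreal (psi (\<Delta> / real (Suc m)) (real (Suc m)) k z)) \<in> borel_measurable borel"
      using psi_meas[of _ _ k 0] by simp
    show ?thesis using nn_integral_translate[OF m, of "- w"] by (simp add: g_def)
  qed
  also have "\<dots> = ennreal (pi * (\<Delta> / real (Suc m)) ^ (k + 1) / (real (Suc m) * (k + 1)))"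
    unfolding psi_def using \<Delta> k by (intro disk_integral) auto
  finally show ?thesis .
qed

lemma countable_Sset: "countable (Sset d \<Delta>)" if "d > 0"
proof -
  have "Sset d \<Delta> = Phi d \<Delta> ` Uset d \<Delta>" using Phi_bij[OF that] by (simp add: bij_betw_def)
  then show ?thesis by simp
qed

lemma main_nn:
  assumes d: "d > 0" and \<Delta>: "\<Delta> > 0" and k: "odd k"
  shows "(\<integral>\<^sup>+z. (\<integral>\<^sup>+t. ennreal (fz k z t) \<partial>count_space (Sset d \<Delta>)) * indicator (Par d) z \<partial>lborel)
       = (\<integral>\<^sup>+m. ennreal (real (card (Rset d \<Delta> (Suc m))) * (pi * (\<Delta> / real (Suc m)) ^ (k + 1) / (real (Suc m) * (k + 1)))) \<partial>count_space UNIV)"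
proof -
  have k0: "k > 0" using k by (auto intro: Nat.gr0I)
  have \<Delta>r: "real_of_int \<Delta> > 0" using \<Delta> by simp
  note Pm = Par_meas[OF d]
  define P where "P = (indicator (Par d) :: complex \<Rightarrow> ennreal)"
  define H where "H u = (\<integral>\<^sup>+z. ennreal (fz k z (Phi d \<Delta> u)) * P z \<partial>lborel)" for u
  define I where "I m = pi * (real_of_int \<Delta> / real (Suc m)) ^ (k + 1) / (real (Suc m) * (k + 1))" for m
  have fzPm: "(\<lambda>z. ennreal (fz k z t) * P z) \<in> borel_measurable borel" for t
    unfolding P_def using fz_meas[of k t] Pm by measurable
  have "(\<integral>\<^sup>+z. (\<integral>\<^sup>+t. ennreal (fz k z t) \<partial>count_space (Sset d \<Delta>)) * indicator (Par d) z \<partial>lborel)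
      = (\<integral>\<^sup>+z. (\<integral>\<^sup>+t. ennreal (fz k z t) * P z \<partial>count_space (Sset d \<Delta>)) \<partial>lborel)"
    by (simp add: P_def nn_integral_multc)
  also have "\<dots> = (\<integral>\<^sup>+t. (\<integral>\<^sup>+z. ennreal (fz k z t) * P z \<partial>lborel) \<partial>count_space (Sset d \<Delta>))"
    using countable_Sset[OF d] fzPm by (intro nn_integral_count_space_nn_integral) auto
  also have "\<dots> = (\<integral>\<^sup>+u. H u \<partial>count_space (Uset d \<Delta>))"
    unfolding H_def by (rule nn_integral_bij_count_space[OF Phi_bij[OF d], symmetric])
  also have "\<dots> = (\<integral>\<^sup>+u. H u * indicator (Uset d \<Delta>) u \<partial>count_space UNIV)"
    by (rule nn_integral_count_space_indicator) simp
  also have "\<dots> = (\<integral>\<^sup>+m. (\<integral>\<^sup>+xy. (\<integral>\<^sup>+pq. H (m, xy, pq) * indicator (Uset d \<Delta>) (m, xy, pq) \<partial>count_space UNIV) \<partial>count_space UNIV) \<partial>count_space UNIV)"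
    by (simp add: nn_integral_count_pair)
  also have "\<dots> = (\<integral>\<^sup>+m. (\<integral>\<^sup>+xy. indicator (Rset d \<Delta> (Suc m)) xy * ennreal (I m) \<partial>count_space UNIV) \<partial>count_space UNIV)"
  proof (intro nn_integral_cong)
    fix m :: nat and xy :: "int \<times> int"
    obtain x0 y0 where xy: "xy = (x0, y0)" by (cases xy)
    show "(\<integral>\<^sup>+pq. H (m, xy, pq) * indicator (Uset d \<Delta>) (m, xy, pq) \<partial>count_space UNIV)
        = indicator (Rset d \<Delta> (Suc m)) xy * ennreal (I m)"
    proof (cases "xy \<in> Rset d \<Delta> (Suc m)")
      case True
      then have inU: "(m, (x0, y0), pq) \<in> Uset d \<Delta>" for pq by (simp add: Uset_def xy)
      have "(\<integral>\<^sup>+pq. H (m, xy, pq) * indicator (Uset d \<Delta>) (m, xy, pq) \<partial>count_space UNIV)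
          = (\<integral>\<^sup>+pq. (\<integral>\<^sup>+z. ennreal (psi (\<Delta> / real (Suc m)) (real (Suc m)) k (z - lat d (fst pq) (snd pq) - lat d x0 y0 / of_nat (Suc m))) * indicator (Par d) z \<partial>lborel) \<partial>count_space UNIV)"
      proof (intro nn_integral_cong)
        fix pq :: "int \<times> int"
        obtain p q where pq: "pq = (p, q)" by (cases pq)
        show "H (m, xy, pq) * indicator (Uset d \<Delta>) (m, xy, pq)
            = (\<integral>\<^sup>+z. ennreal (psi (\<Delta> / real (Suc m)) (real (Suc m)) k (z - lat d (fst pq) (snd pq) - lat d x0 y0 / of_nat (Suc m))) * indicator (Par d) z \<partial>lborel)"
          using inU[of pq] fz_Phi[OF d k inU[of pq, unfolded pq]]
          by (simp add: H_def P_def xy pq)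
      qed
      also have "\<dots> = ennreal (I m)"
        unfolding I_def by (rule inner_value[OF d \<Delta>r k0])
      finally show ?thesis using True by simp
    next
      case False
      then have "(m, xy, pq) \<notin> Uset d \<Delta>" for pq by (simp add: Uset_def)
      then show ?thesis using False by simp
    qed
  qed
  also have "\<dots> = (\<integral>\<^sup>+m. ennreal (real (card (Rset d \<Delta> (Suc m))) * I m) \<partial>count_space UNIV)"
  proof (intro nn_integral_cong)
    fix m
    have fin: "finite (Rset d \<Delta> (Suc m))"
      by (rule finite_subset[of _ "{0..<int (Suc m)} \<times> {0..<int (Suc m)}"]) (auto simp: Rset_def)
    have "(\<integral>\<^sup>+xy. indicator (Rset d \<Delta> (Suc m)) xy * ennreal (I m) \<partial>count_space UNIV)
        = (\<integral>\<^sup>+xy. indicator (Rset d \<Delta> (Suc m)) xy \<partial>count_space UNIV) * ennreal (I m)"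
      by (simp add: nn_integral_multc)
    also have "\<dots> = of_nat (card (Rset d \<Delta> (Suc m))) * ennreal (I m)"
      using fin by (simp add: emeasure_count_space_finite)
    also have "\<dots> = ennreal (real (card (Rset d \<Delta> (Suc m))) * I m)"
      by (simp add: ennreal_mult' ennreal_of_nat_eq_real_of_nat)
    finally show "(\<integral>\<^sup>+xy. indicator (Rset d \<Delta> (Suc m)) xy * ennreal (I m) \<partial>count_space UNIV)
        = ennreal (real (card (Rset d \<Delta> (Suc m))) * I m)" .
  qed
  finally show ?thesis by (simp add: I_def add.commute)
qed

theorem theorem4p1:
  fixes d k :: nat and \<Delta> :: int
  assumes "d \<in> {1, 2, 3, 7, 11}"
    and "\<Delta> > 0"
    and "\<not> (\<exists>\<beta>\<in>Od d. \<beta> * cnj \<beta> = of_int \<Delta>)"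
    and "odd k"
  shows "1 / (sqrt \<bar>real_of_int (discK d)\<bar> / 2) * integral (Par d) (Hfun d k \<Delta>)
         = 2 * pi * real_of_int \<Delta> ^ (k + 1) / (real (k + 1) * sqrt \<bar>real_of_int (discK d)\<bar>)
           * Zfun d (- \<Delta>) (real (k + 1))"
proof -
  have d: "d > 0" using assms(1) by auto
  have \<Delta>: "\<Delta> > 0" by (rule assms(2))
  have k: "odd k" by (rule assms(4))
  have k0: "k > 0" using k by (auto intro: Nat.gr0I)
  define G where "G z = (\<integral>\<^sup>+t. ennreal (fz k z t) \<partial>count_space (Sset d \<Delta>))" for z
  define P where "P = (indicator (Par d) :: complex \<Rightarrow> ennreal)"
  define C where "C = pi * real_of_int \<Delta> ^ (k + 1) / real (k + 1)"
  define a where "a m = real (card (Rset d \<Delta> (Suc m))) * (pi * (\<Delta> / real (Suc m)) ^ (k + 1) / (real (Suc m) * (k + 1)))" for m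
  define z where "z m = real (r_count d (- \<Delta>) (Suc m)) * real (Suc m) powr (- real (k + 1) - 1)" for m
  have Hf: "Hfun d k \<Delta> w = enn2real (G w)" for w
    unfolding Hfun_eq G_def by (rule infsum_enn2real) (auto simp: fz_def)
  have az: "a m = C * z m" for m
  proof -
    have r: "r_count d (- \<Delta>) (Suc m) = card (Rset d \<Delta> (Suc m))" using r_count_Rset[OF d, of "Suc m" \<Delta>] by simp
    have pw: "real (Suc m) powr (- real (k + 1) - 1) = 1 / real (Suc m) ^ (k + 2)"
    proof -
      have "real (Suc m) powr (- real (k + 1) - 1) = real (Suc m) powr (- real (k + 2))" by simp
      also have "\<dots> = inverse (real (Suc m) powr real (k + 2))" by (rule powr_minus)
      also have "real (Suc m) powr real (k + 2) = real (Suc m) ^ (k + 2)" by (rule powr_realpow) simp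
      finally show ?thesis by (simp add: divide_inverse)
    qed
    show ?thesis unfolding a_def z_def C_def r pw
      by (simp add: field_simps power_divide power_add)
  qed
  have zs: "summable z" unfolding z_def using Z_summable[OF d, of "real (k + 1)" "- \<Delta>"] k0 by simp
  have as: "summable a" unfolding az by (rule summable_mult[OF zs])
  have a0: "a m \<ge> 0" for m using \<Delta> by (simp add: a_def)
  define V where "V = suminf a"
  have V: "V = C * Zfun d (- \<Delta>) (real (k + 1))"
    unfolding V_def az Zfun_def z_def[symmetric] by (rule suminf_mult[OF zs])
  have V0: "V \<ge> 0" unfolding V_def using as a0 by (rule suminf_nonneg)
  have main: "(\<integral>\<^sup>+w. G w * P w \<partial>lborel) = ennreal V"
  proof -
    have "(\<integral>\<^sup>+w. G w * P w \<partial>lborel) = (\<integral>\<^sup>+m. ennreal (a m) \<partial>count_space UNIV)"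
      using main_nn[OF d \<Delta> k] by (simp add: G_def P_def a_def add.commute)
    also have "\<dots> = (\<Sum>m. ennreal (a m))" by (rule nn_integral_count_space_nat)
    also have "\<dots> = ennreal V" unfolding V_def using a0 as by (rule suminf_ennreal2)
    finally show ?thesis .
  qed
  note Pm = Par_meas[OF d]
  have Gm: "G \<in> borel_measurable borel"
    unfolding G_def using countable_Sset[OF d] fz_meas by (intro meas_count_sum) auto
  have GPm: "(\<lambda>w. G w * P w) \<in> borel_measurable lborel"
    unfolding P_def using Gm Pm by measurable
  have AEfin: "AE w in lborel. G w * P w \<noteq> \<infinity>"
    using nn_integral_PInf_AE[OF GPm] main by simp
  define f where "f w = Hfun d k \<Delta> w * indicator (Par d) w" for w
  have fm: "f \<in> borel_measurable borel"
    unfolding f_def Hf using Gm Pm by measurable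
  have f0: "0 \<le> f w" for w by (simp add: f_def Hf)
  have "(\<integral>\<^sup>+w. ennreal (f w) \<partial>lborel) = (\<integral>\<^sup>+w. G w * P w \<partial>lborel)"
  proof (rule nn_integral_cong_AE)
    show "AE w in lborel. ennreal (f w) = G w * P w"
      using AEfin
    proof (rule AE_mp, intro AE_I2 impI)
      fix w assume fin: "G w * P w \<noteq> \<infinity>"
      show "ennreal (f w) = G w * P w"
      proof (cases "w \<in> Par d")
        case True
        then have "G w < top" using fin by (simp add: P_def top.not_eq_extremum)
        then show ?thesis using True by (simp add: f_def Hf P_def)
      next
        case False
        then show ?thesis by (simp add: f_def P_def)
      qed
    qed
  qed
  also have "\<dots> = ennreal V" by (rule main)
  finally have "(f has_integral V) UNIV" using fm f0 V0 by (intro nn_integral_has_integral) auto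
  moreover have "f = (\<lambda>w. if w \<in> Par d then Hfun d k \<Delta> w else 0)" by (auto simp: f_def fun_eq_iff)
  ultimately have "(Hfun d k \<Delta> has_integral V) (Par d)" by (simp add: has_integral_restrict_UNIV)
  then have I: "integral (Par d) (Hfun d k \<Delta>) = V" by (rule integral_unique)
  have s0: "sqrt \<bar>real_of_int (discK d)\<bar> > 0" using d by (simp add: discK_def)
  show ?thesis unfolding I V C_def using s0 by (simp add: field_simps)
qed

end
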